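(* Let $F$ be a finite field with $q=|F|$. Let $k,n\in\mathbb{N}$ satisfy $k\le n$. Fix any $a=(a_0,\ldots,a_{k-1})\in F^k$. Then the number of $(2n+1)$-tuples $x=(x_0,\ldots,x_{2n})\in F^{2n+1}$ satisfying $(x_0,\ldots,x_{k-1})=a$ and $\det(H_{n,n}(x))=0$ is $q^{2n-k}$.
   Context: $\mathbb{N}=\{0,1,2,\ldots\}$. For $x=(x_0,\ldots,x_{2n})$, $H_{n,n}(x)$ is the $(n+1)\times(n+1)$ matrix $(x_{i+j})_{0\le i,j\le n}$. *)

theory Defs
  imports "Jordan_Normal_Form.Determinant"
begin

definition hankel :: "nat \<Rightarrow> 'a list \<Rightarrow> 'a mat" where
  "hankel n xs = mat (n+1) (n+1) (\<lambda>(i,j). xs ! (i+j))"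

end

theory Submission
  imports Defs "HOL-Computational_Algebra.Formal_Power_Series"
begin


definition WF :: "(nat \<Rightarrow> 'a::field) \<Rightarrow> nat \<Rightarrow> 'a fps" where
  "WF x m = Abs_fps (\<lambda>j. x (m+j))"
definition VF :: "(nat \<Rightarrow> 'a::field) \<Rightarrow> nat \<Rightarrow> 'a fps" where
  "VF x m = inverse (WF x m)"
definition ZF :: "(nat \<Rightarrow> 'a::field) \<Rightarrow> nat \<Rightarrow> nat \<Rightarrow> 'a fps" where
  "ZF x m f = Abs_fps (\<lambda>t. fps_nth (VF x m) (m+2+f+t))"

lemma WV: assumes "x m \<noteq> 0" shows "WF x m * VF x m = 1"
  unfolding VF_def by (rule inverse_mult_eq_1') (simp add: WF_def assms)

lemma conv: assumes "x m \<noteq> 0"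
  shows "(\<Sum>u=0..N. fps_nth (WF x m) u * fps_nth (VF x m) (N-u)) = (if N=0 then 1 else 0)"
proof -
  have "(\<Sum>u=0..N. fps_nth (WF x m) u * fps_nth (VF x m) (N-u)) = fps_nth (WF x m * VF x m) N"
    by (simp add: fps_mult_nth)
  also have "\<dots> = (if N=0 then 1 else 0)" using WV[of x m, OF assms] by simp
  finally show ?thesis .
qed

lemma phi0:
  assumes z: "\<forall>t<m. x t = 0" and nz: "x m \<noteq> 0" and c: "c \<le> m"
  shows "(\<Sum>s=0..m+1+f. x(c+s) * fps_nth (VF x m) (m+1+f-s)) = 0"
proof -
  define D where "D = m - c"
  have split: "{0..m+1+f} = {0..<D} \<union> {0+D..(c+1+f)+D}" using c by (auto simp: D_def)
  have "(\<Sum>s=0..m+1+f. x(c+s) * fps_nth (VF x m) (m+1+f-s))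
     = (\<Sum>s\<in>{0..<D}. x(c+s) * fps_nth (VF x m) (m+1+f-s)) + (\<Sum>s\<in>{0+D..(c+1+f)+D}. x(c+s) * fps_nth (VF x m) (m+1+f-s))"
    unfolding split by (rule sum.union_disjoint) auto
  also have "(\<Sum>s\<in>{0..<D}. x(c+s) * fps_nth (VF x m) (m+1+f-s)) = 0"
    using z c by (intro sum.neutral) (auto simp: D_def)
  also have "(\<Sum>s\<in>{0+D..(c+1+f)+D}. x(c+s) * fps_nth (VF x m) (m+1+f-s))
      = (\<Sum>u=0..c+1+f. fps_nth (WF x m) u * fps_nth (VF x m) (c+1+f-u))"
    unfolding sum.shift_bounds_cl_nat_ivl
    by (intro sum.cong refl) (use c in \<open>auto simp: D_def WF_def algebra_simps\<close>)
  also have "\<dots> = 0" by (subst conv[of x m, OF nz]) simp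
  finally show ?thesis by simp
qed

lemma phi1:
  assumes nz: "x m \<noteq> 0"
  shows "(\<Sum>s=0..m+1+f. x(m+1+g+s) * fps_nth (VF x m) (m+1+f-s)) = - (fps_nth (WF x m * ZF x m f) g)"
proof -
  define N where "N = g+1+(m+1+f)"
  have split: "{0..N} = {0..g} \<union> {0+(g+1)..(m+1+f)+(g+1)}" by (auto simp: N_def)
  have "0 = (\<Sum>u=0..N. fps_nth (WF x m) u * fps_nth (VF x m) (N-u))" by (subst conv[of x m, OF nz]) (simp add: N_def)
  also have "\<dots> = (\<Sum>u\<in>{0..g}. fps_nth (WF x m) u * fps_nth (VF x m) (N-u)) + (\<Sum>u\<in>{0+(g+1)..(m+1+f)+(g+1)}. fps_nth (WF x m) u * fps_nth (VF x m) (N-u))"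
    unfolding split by (rule sum.union_disjoint) auto
  also have "(\<Sum>u\<in>{0..g}. fps_nth (WF x m) u * fps_nth (VF x m) (N-u)) = fps_nth (WF x m * ZF x m f) g"
    unfolding fps_mult_nth
  proof (intro sum.cong refl)
    fix u assume "u \<in> {0..g}"
    hence "N - u = m+2+f+(g-u)" by (auto simp: N_def)
    thus "fps_nth (WF x m) u * fps_nth (VF x m) (N - u) = fps_nth (WF x m) u * fps_nth (ZF x m f) (g - u)"
      by (simp add: ZF_def)
  qed
  also have "(\<Sum>u\<in>{0+(g+1)..(m+1+f)+(g+1)}. fps_nth (WF x m) u * fps_nth (VF x m) (N-u))
     = (\<Sum>s=0..m+1+f. x(m+1+g+s) * fps_nth (VF x m) (m+1+f-s))"
    unfolding sum.shift_bounds_cl_nat_ivl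
    by (intro sum.cong refl) (auto simp: N_def WF_def algebra_simps)
  finally show ?thesis by (simp add: eq_neg_iff_add_eq_0 add.commute)
qed

lemma antitri_det:
  fixes h :: "nat \<Rightarrow> 'a::field"
  assumes z: "\<And>t. t+1 < p \<Longrightarrow> h t = 0" and nz: "h (p-1) \<noteq> 0"
  shows "det (mat p p (\<lambda>(i,j). h(i+j))) \<noteq> 0"
proof -
  define R where "R = mat p p (\<lambda>(i,j). if i+j = p-1 then 1 else (0::'a))"
  define B where "B = mat p p (\<lambda>(i,j). h(i+j))"
  have R: "R \<in> carrier_mat p p" and B: "B \<in> carrier_mat p p" by (auto simp: R_def B_def)
  have RR: "R * R = 1\<^sub>m p"
  proof (rule eq_matI)
    fix i j assume i: "i < dim_row (1\<^sub>m p :: 'a mat)" and j: "j < dim_col (1\<^sub>m p :: 'a mat)"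
    hence ij: "i < p" "j < p" by auto
    have "(R * R) $$ (i,j) = (\<Sum>k\<in>{0..<p}. (if i+k = p-1 then 1 else 0) * (if k+j = p-1 then 1 else (0::'a)))"
      using ij by (simp add: R_def scalar_prod_def)
    also have "\<dots> = (\<Sum>k\<in>{0..<p}. if k = p-1-i then (if p-1-i+j = p-1 then 1 else 0) else (0::'a))"
      by (intro sum.cong refl) (use ij in auto)
    also have "\<dots> = (if i = j then 1 else 0)" using ij by (subst sum.delta) auto
    finally show "(R * R) $$ (i,j) = 1\<^sub>m p $$ (i,j)" using ij by simp
  qed (auto simp: R_def)
  have "det R * det R = 1" using det_mult[OF R R] RR by simp
  hence dR: "det R \<noteq> 0" by auto
  have BR: "B * R \<in> carrier_mat p p" using B R by auto
  have BRe: "(B * R) $$ (i,j) = h (i + (p-1-j))" if "i < p" "j < p" for i j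
  proof -
    have "(B * R) $$ (i,j) = (\<Sum>k\<in>{0..<p}. h(i+k) * (if k+j = p-1 then 1 else 0))"
      using that by (simp add: R_def B_def scalar_prod_def)
    also have "\<dots> = (\<Sum>k\<in>{0..<p}. if k = p-1-j then h(i+(p-1-j)) else 0)"
      by (intro sum.cong refl) (use that in auto)
    also have "\<dots> = h (i + (p-1-j))" using that by (subst sum.delta) auto
    finally show ?thesis .
  qed
  have "det (B * R) = prod_list (diag_mat (B * R))"
    by (rule det_lower_triangular[OF _ BR]) (subst BRe, auto intro!: z)
  also have "\<dots> \<noteq> 0"
    using BR BRe nz by (auto simp: diag_mat_def prod_list_zero_iff)
  finally have "det B * det R \<noteq> 0" using det_mult[OF B R] by simp
  thus ?thesis unfolding B_def by auto
qed

lemma sum_restrict_le: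
  assumes "i < (N::nat)"
  shows "(\<Sum>r\<in>{0..<N}. if r \<le> i then g r else 0) = (\<Sum>r=0..i. g r)"
proof -
  have "(\<Sum>r\<in>{0..<N}. if r \<le> i then g r else 0) = (\<Sum>r\<in>{0..<N}. if r \<in> {0..i} then g r else 0)"
    by (intro sum.cong) auto
  also have "\<dots> = sum g ({0..<N} \<inter> {0..i})" by (rule sum.inter_restrict[symmetric]) simp
  also have "{0..<N} \<inter> {0..i} = {0..i}" using assms by auto
  finally show ?thesis .
qed

lemma sum_delta_mult:
  assumes "i < (N::nat)"
  shows "(\<Sum>r\<in>{0..<N}. (if r = i then 1 else 0) * (f r :: 'a::semiring_1)) = f i"
proof -
  have "(\<Sum>r\<in>{0..<N}. (if r = i then 1 else 0) * f r) = (\<Sum>r\<in>{0..<N}. if r = i then f r else 0)"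
    by (intro sum.cong) auto
  also have "\<dots> = f i" using assms by simp
  finally show ?thesis .
qed

lemma key_det:
  fixes xs :: "'a::field list"
  assumes z: "\<forall>t<m. xs!t = 0" and nz: "xs!m \<noteq> 0" and mn: "m < n"
  shows "det (hankel n xs) = 0 \<longleftrightarrow>
         det (hankel (n-m-1) (map (\<lambda>i. fps_nth (VF ((!) xs) m) (m+2+i)) [0..<2*(n-m-1)+1])) = 0"
proof -
  define x where "x = (!) xs"
  define V where "V k = fps_nth (VF x m) k" for k
  define N where "N = n+1"
  define p where "p = m+1"
  define d where "d = n-m"
  have Npd: "N = p + d" using mn by (simp add: N_def p_def d_def)
  define Am where "Am = mat N N (\<lambda>(r,c). if c < p then (if r = c then 1 else 0) else (if r \<le> c then V(c-r) else (0::'a)))"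
  define H where "H = hankel n xs"
  define ys where "ys = map (\<lambda>i. V (m+2+i)) [0..<2*(n-m-1)+1]"
  define H' where "H' = hankel (n-m-1) ys"
  define B0 where "B0 = mat p p (\<lambda>(i,j). x(i+j))"
  have Am: "Am \<in> carrier_mat N N" and H: "H \<in> carrier_mat N N" and H': "H' \<in> carrier_mat d d"
    and B0: "B0 \<in> carrier_mat p p"
    using mn by (auto simp: Am_def H_def hankel_def N_def H'_def d_def B0_def)
  have He: "H $$ (i,j) = x(i+j)" if "i<N" "j<N" for i j using that by (simp add: H_def hankel_def N_def x_def)
  have Ame: "Am $$ (r,c) = (if c < p then (if r = c then 1 else 0) else (if r \<le> c then V(c-r) else 0))"
    if "r<N" "c<N" for r c using that by (simp add: Am_def)
  have z': "\<forall>t<m. x t = 0" using z by (simp add: x_def)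
  have nz': "x m \<noteq> 0" using nz by (simp add: x_def)
  define T where "T = transpose_mat Am * H"
  have T: "T \<in> carrier_mat N N" using Am H by (simp add: T_def)
  have Te: "T $$ (i,s) = (if i<p then x(i+s) else (\<Sum>r=0..i. V(i-r) * x(r+s)))"
    if "i<N" "s<N" for i s
  proof -
    have "T $$ (i,s) = (\<Sum>r\<in>{0..<N}. Am $$ (r,i) * x(r+s))"
      using that Am H by (auto simp: T_def scalar_prod_def He intro!: sum.cong)
    also have "\<dots> = (if i<p then x(i+s) else (\<Sum>r=0..i. V(i-r) * x(r+s)))"
    proof (cases "i < p")
      case True
      have "(\<Sum>r\<in>{0..<N}. Am $$ (r,i) * x(r+s)) = (\<Sum>r\<in>{0..<N}. (if r = i then 1 else 0) * x(r+s))"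
        using that True by (intro sum.cong refl) (simp add: Ame)
      also have "\<dots> = x(i+s)" by (rule sum_delta_mult) (use that in simp)
      finally show ?thesis using True by simp
    next
      case False
      have "(\<Sum>r\<in>{0..<N}. Am $$ (r,i) * x(r+s)) = (\<Sum>r\<in>{0..<N}. if r \<le> i then V(i-r) * x(r+s) else 0)"
        using that False by (intro sum.cong refl) (simp add: Ame)
      also have "\<dots> = (\<Sum>r=0..i. V(i-r) * x(r+s))" by (rule sum_restrict_le) (use that in simp)
      finally show ?thesis using False by simp
    qed
    finally show ?thesis .
  qed
  define M where "M = T * Am"
  have Me: "M $$ (i,j) = (if j<p then T $$ (i,j) else (\<Sum>s=0..j. T $$ (i,s) * V(j-s)))"
    if "i<N" "j<N" for i j
  proof -
    have "M $$ (i,j) = (\<Sum>s\<in>{0..<N}. T $$ (i,s) * Am $$ (s,j))"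
      using that Am T by (auto simp: M_def scalar_prod_def intro!: sum.cong)
    also have "\<dots> = (if j<p then T $$ (i,j) else (\<Sum>s=0..j. T $$ (i,s) * V(j-s)))"
    proof (cases "j < p")
      case True
      have "(\<Sum>s\<in>{0..<N}. T $$ (i,s) * Am $$ (s,j)) = (\<Sum>s\<in>{0..<N}. (if s = j then 1 else 0) * T $$ (i,s))"
        using that True by (intro sum.cong refl) (simp add: Ame)
      also have "\<dots> = T $$ (i,j)" by (rule sum_delta_mult) (use that in simp)
      finally show ?thesis using True by simp
    next
      case False
      have "(\<Sum>s\<in>{0..<N}. T $$ (i,s) * Am $$ (s,j)) = (\<Sum>s\<in>{0..<N}. if s \<le> j then T $$ (i,s) * V(j-s) else 0)"
        using that False by (intro sum.cong refl) (simp add: Ame)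
      also have "\<dots> = (\<Sum>s=0..j. T $$ (i,s) * V(j-s))" by (rule sum_restrict_le) (use that in simp)
      finally show ?thesis using False by simp
    qed
    finally show ?thesis .
  qed
  have M4: "M = four_block_mat B0 (0\<^sub>m p d) (0\<^sub>m d p) ((-1) \<cdot>\<^sub>m H')"
  proof (rule eq_matI)
    fix i j assume "i < dim_row (four_block_mat B0 (0\<^sub>m p d) (0\<^sub>m d p) ((-1) \<cdot>\<^sub>m H'))"
      "j < dim_col (four_block_mat B0 (0\<^sub>m p d) (0\<^sub>m d p) ((-1) \<cdot>\<^sub>m H'))"
    hence i: "i < N" and j: "j < N" using B0 H' Npd by auto
    show "M $$ (i,j) = four_block_mat B0 (0\<^sub>m p d) (0\<^sub>m d p) ((-1) \<cdot>\<^sub>m H') $$ (i,j)"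
    proof (cases "i < p")
      case ip: True
      show ?thesis
      proof (cases "j < p")
        case True
        thus ?thesis using i j ip B0 H' Npd by (simp add: Me Te B0_def)
      next
        case False
        then obtain f where f: "j = m+1+f" by (metis add.commute le_iff_add not_less p_def)
        have "M $$ (i,j) = (\<Sum>s=0..m+1+f. x(i+s) * fps_nth (VF x m) (m+1+f-s))"
          using i j ip False by (simp add: Me Te V_def f)
        also have "\<dots> = 0" by (rule phi0[OF z' nz']) (use ip in \<open>simp add: p_def\<close>)
        finally show ?thesis using i j ip False B0 H' Npd by simp
      qed
    next
      case ip: False
      then obtain e where e: "i = m+1+e" by (metis add.commute le_iff_add not_less p_def)
      show ?thesis
      proof (cases "j < p")
        case True
        have "M $$ (i,j) = (\<Sum>r=0..m+1+e. V(m+1+e-r) * x(r+j))"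
          using i j ip True by (simp add: Me Te e)
        also have "\<dots> = (\<Sum>s=0..m+1+e. x(j+s) * fps_nth (VF x m) (m+1+e-s))"
          by (simp add: V_def mult.commute add.commute)
        also have "\<dots> = 0" by (rule phi0[OF z' nz']) (use True in \<open>simp add: p_def\<close>)
        finally show ?thesis using i j ip True B0 H' Npd by simp
      next
        case False
        then obtain f where f: "j = m+1+f" by (metis add.commute le_iff_add not_less p_def)
        have "M $$ (i,j) = (\<Sum>s=0..j. (\<Sum>r=0..i. V(i-r) * x(r+s)) * V(j-s))"
          using i j ip False by (simp add: Me Te)
        also have "\<dots> = (\<Sum>r=0..i. V(i-r) * (\<Sum>s=0..j. x(r+s) * V(j-s)))"
          by (simp add: sum_distrib_left sum_distrib_right mult.assoc sum.swap[of _ "{0..j}"])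
        also have "\<dots> = (\<Sum>r\<in>{0..m} \<union> {0+(m+1)..e+(m+1)}. V(i-r) * (\<Sum>s=0..j. x(r+s) * V(j-s)))"
          by (intro sum.cong refl) (auto simp: e)
        also have "\<dots> = (\<Sum>r\<in>{0..m}. V(i-r) * (\<Sum>s=0..j. x(r+s) * V(j-s)))
             + (\<Sum>r\<in>{0+(m+1)..e+(m+1)}. V(i-r) * (\<Sum>s=0..j. x(r+s) * V(j-s)))"
          by (rule sum.union_disjoint) auto
        also have "(\<Sum>r\<in>{0..m}. V(i-r) * (\<Sum>s=0..j. x(r+s) * V(j-s))) = 0"
        proof (intro sum.neutral ballI)
          fix r assume "r \<in> {0..m}"
          hence "(\<Sum>s=0..m+1+f. x(r+s) * fps_nth (VF x m) (m+1+f-s)) = 0"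
            by (intro phi0[OF z' nz']) auto
          thus "V(i-r) * (\<Sum>s=0..j. x(r+s) * V(j-s)) = 0" by (simp add: f V_def)
        qed
        also have "(\<Sum>r\<in>{0+(m+1)..e+(m+1)}. V(i-r) * (\<Sum>s=0..j. x(r+s) * V(j-s)))
            = (\<Sum>g=0..e. V(e-g) * (\<Sum>s=0..m+1+f. x(m+1+g+s) * fps_nth (VF x m) (m+1+f-s)))"
          unfolding sum.shift_bounds_cl_nat_ivl
          by (intro sum.cong refl) (simp add: e f V_def algebra_simps)
        also have "\<dots> = (\<Sum>g=0..e. - (fps_nth (WF x m * ZF x m f) g * fps_nth (VF x m) (e-g)))"
          by (intro sum.cong refl) (subst phi1[of x m, OF nz'], simp add: V_def mult.commute)
        also have "\<dots> = - fps_nth (WF x m * ZF x m f * VF x m) e"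
          by (simp add: fps_mult_nth sum_negf)
        also have "WF x m * ZF x m f * VF x m = ZF x m f * (WF x m * VF x m)" by (simp add: ac_simps)
        also have "\<dots> = ZF x m f" using WV[of x m, OF nz'] by simp
        finally have "M $$ (i,j) = - V (m+2+f+e)" by (simp add: ZF_def V_def)
        moreover have "e < d" "f < d" using i j e f by (auto simp: N_def d_def)
        moreover have "ys ! (e+f) = V (m+2+f+e)" unfolding ys_def
          using \<open>e < d\<close> \<open>f < d\<close> by (subst nth_map_upt) (auto simp: d_def algebra_simps)
        ultimately have "H' $$ (e,f) = V (m+2+f+e)"
          by (simp add: H'_def hankel_def d_def del: upt_Suc)
        moreover have "four_block_mat B0 (0\<^sub>m p d) (0\<^sub>m d p) ((-1) \<cdot>\<^sub>m H') $$ (i,j) = - H' $$ (e,f)"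
          using i j ip False B0 H' Npd e f by (simp add: p_def)
        ultimately show ?thesis using \<open>M $$ (i,j) = - V (m+2+f+e)\<close> by simp
      qed
    qed
  qed (use B0 H' Npd M_def T_def Am in auto)
  have "det M = det B0 * det ((-1) \<cdot>\<^sub>m H')"
    unfolding M4 by (rule det_four_block_mat_lower_left_zero[OF B0 _ refl]) (use H' in auto)
  also have "det ((-1) \<cdot>\<^sub>m H') = (-1)^d * det H'" using H' by simp
  finally have dM: "det M = det B0 * ((-1)^d * det H')" .
  have "det M = det (transpose_mat Am) * det H * det Am"
    unfolding M_def T_def using Am H by (simp add: det_mult[of _ N])
  also have "det (transpose_mat Am) = det Am" using Am by (rule det_transpose)
  finally have dM2: "det M = det Am * det H * det Am" .
  have "det Am = prod_list (diag_mat Am)"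
    by (rule det_upper_triangular[OF _ Am]) (use Am in \<open>auto simp: upper_triangular_def Ame\<close>)
  also have "\<dots> \<noteq> 0"
  proof -
    have "V 0 \<noteq> 0" using nz' by (simp add: V_def VF_def WF_def)
    thus ?thesis using Am by (auto simp: diag_mat_def prod_list_zero_iff Ame)
  qed
  finally have dA: "det Am \<noteq> 0" .
  have dB: "det B0 \<noteq> 0" unfolding B0_def
    by (rule antitri_det) (use z' nz' in \<open>auto simp: p_def\<close>)
  have "det H = 0 \<longleftrightarrow> det H' = 0" using dM dM2 dA dB by auto
  thus ?thesis by (simp add: H_def H'_def ys_def V_def x_def)
qed



lemma lists_UNIV_eq: "{xs::'a list. set xs \<subseteq> UNIV \<and> length xs = n} = {xs. length xs = n}" by simp

lemma finite_len: "finite {xs::'a::finite list. length xs = n}"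
  using finite_lists_length_eq[of "UNIV::'a set" n] by simp

lemma card_len: "card {xs::'a::finite list. length xs = n} = card (UNIV :: 'a set) ^ n"
  using card_lists_length_eq[of "UNIV::'a set" n] by simp

lemma card_prefix:
  assumes "length (a::'a::finite list) = k" "k \<le> L"
  shows "card {xs. length xs = L \<and> take k xs = a} = card (UNIV :: 'a set) ^ (L-k)"
proof -
  have "{xs. length xs = L \<and> take k xs = a} = (\<lambda>ys. a @ ys) ` {ys. length ys = L-k}"
  proof (intro equalityI subsetI)
    fix xs assume "xs \<in> {xs. length xs = L \<and> take k xs = a}"
    hence h: "length xs = L" "take k xs = a" by auto
    have "xs = a @ drop k xs" using h(2) append_take_drop_id[of k xs] by simp
    moreover have "length (drop k xs) = L - k" using h by simp
    ultimately show "xs \<in> (\<lambda>ys. a @ ys) ` {ys. length ys = L-k}" by blast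
  qed (use assms in auto)
  also have "card \<dots> = card {ys::'a list. length ys = L-k}" by (rule card_image) (auto simp: inj_on_def)
  finally show ?thesis by (simp add: card_len)
qed

lemma card_append_split:
  fixes P Q :: "'a::finite list \<Rightarrow> bool"
  shows "card {zs. length zs = l1 + l2 \<and> P (take l1 zs) \<and> Q (drop l1 zs)}
       = card {u. length u = l1 \<and> P u} * card {v. length v = l2 \<and> Q v}"
proof -
  have "{zs. length zs = l1 + l2 \<and> P (take l1 zs) \<and> Q (drop l1 zs)}
      = (\<lambda>(u,v). u @ v) ` ({u. length u = l1 \<and> P u} \<times> {v. length v = l2 \<and> Q v})"
  proof (intro equalityI subsetI)
    fix zs assume "zs \<in> {zs. length zs = l1 + l2 \<and> P (take l1 zs) \<and> Q (drop l1 zs)}"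
    thus "zs \<in> (\<lambda>(u,v). u @ v) ` ({u. length u = l1 \<and> P u} \<times> {v. length v = l2 \<and> Q v})"
      by (intro image_eqI[of _ _ "(take l1 zs, drop l1 zs)"]) auto
  qed auto
  also have "card \<dots> = card ({u. length u = l1 \<and> P u} \<times> {v. length v = l2 \<and> Q v})"
    by (rule card_image) (auto simp: inj_on_def)
  finally show ?thesis by (simp add: card_cartesian_product)
qed

definition S :: "nat \<Rightarrow> nat \<Rightarrow> 'a::field list \<Rightarrow> 'a list set" where
  "S n k a = {xs. length xs = 2*n+1 \<and> take k xs = a \<and> det (hankel n xs) = 0}"

lemma S_split:
  fixes a :: "'a::{field,finite} list"
  assumes "length a = k" "k < n"
  shows "card (S n k a) = (\<Sum>c\<in>UNIV. card (S n (Suc k) (a @ [c])))"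
proof -
  have "S n k a = (\<Union>c. S n (Suc k) (a @ [c]))"
  proof (intro equalityI subsetI)
    fix xs assume xs: "xs \<in> S n k a"
    hence "k < length xs" using assms by (auto simp: S_def)
    hence "take (Suc k) xs = a @ [xs ! k]" using xs by (auto simp: S_def take_Suc_conv_app_nth)
    thus "xs \<in> (\<Union>c. S n (Suc k) (a @ [c]))" using xs by (auto simp: S_def)
  next
    fix xs assume "xs \<in> (\<Union>c. S n (Suc k) (a @ [c]))"
    then obtain c where xs: "xs \<in> S n (Suc k) (a @ [c])" by auto
    hence "take k (take (Suc k) xs) = a" using assms by (simp add: S_def)
    thus "xs \<in> S n k a" using xs by (simp add: S_def min_def)
  qed
  also have "card \<dots> = (\<Sum>c\<in>UNIV. card (S n (Suc k) (a @ [c])))"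
  proof (rule card_UN_disjoint)
    show "\<forall>i\<in>UNIV. finite (S n (Suc k) (a @ [i]))"
      using finite_len[of "2*n+1"] by (auto simp: S_def intro: finite_subset)
    show "\<forall>i\<in>UNIV. \<forall>j\<in>UNIV. i \<noteq> j \<longrightarrow> S n (Suc k) (a @ [i]) \<inter> S n (Suc k) (a @ [j]) = {}"
      by (auto simp: S_def)
  qed simp
  finally show ?thesis .
qed

definition Yl :: "nat \<Rightarrow> nat \<Rightarrow> 'a::field list \<Rightarrow> 'a list" where
  "Yl m n xs = map (\<lambda>i. fps_nth (VF ((!) xs) m) (m+2+i)) [0..<2*(n-m-1)+1]"
definition Tm :: "nat \<Rightarrow> nat \<Rightarrow> 'a::field list \<Rightarrow> 'a list" where
  "Tm m n xs = take (2*m+2) xs @ Yl m n xs"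

lemma VF_cong:
  assumes "\<forall>t\<le>m+r. xs!t = xs'!t"
  shows "fps_nth (VF ((!) xs) m) r = fps_nth (VF ((!) xs') m) r"
proof -
  have 0: "xs!m = xs'!m" using assms by auto
  have "fps_right_inverse_constructor (WF ((!) xs) m) (inverse (xs!m)) r
      = fps_right_inverse_constructor (WF ((!) xs') m) (inverse (xs!m)) r"
    by (rule fps_right_inverse_constructor_cong) (use assms in \<open>auto simp: WF_def\<close>)
  thus ?thesis using 0 by (simp add: VF_def fps_inverse_def WF_def)
qed

lemma VF_last:
  assumes r: "0 < r" and eq: "\<forall>t<m+r. xs!t = xs'!t" and nz: "xs!m \<noteq> 0"
    and V: "fps_nth (VF ((!) xs) m) r = fps_nth (VF ((!) xs') m) r"
  shows "xs!(m+r) = xs'!(m+r)"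
proof -
  define f where "f = WF ((!) xs) m"
  define g where "g = WF ((!) xs') m"
  define c where "c = inverse (xs!m)"
  have c: "c \<noteq> 0" using nz by (simp add: c_def)
  have f0: "fps_nth f 0 = xs!m" and g0: "fps_nth g 0 = xs!m" using eq r by (auto simp: f_def g_def WF_def)
  have Vf: "fps_nth (VF ((!) xs) m) k = fps_right_inverse_constructor f c k" for k
    using f0 by (simp add: VF_def fps_inverse_def f_def c_def)
  have Vg: "fps_nth (VF ((!) xs') m) k = fps_right_inverse_constructor g c k" for k
    using g0 by (simp add: VF_def fps_inverse_def g_def c_def)
  have split: "{1..r} = insert r {1..<r}" using r by auto
  have rec: "fps_right_inverse_constructor h c r
      = -c * (fps_nth h r * c + (\<Sum>i\<in>{1..<r}. fps_nth h i * fps_right_inverse_constructor h c (r-i)))" for h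
  proof -
    have "fps_right_inverse_constructor h c r = -c * (\<Sum>i\<in>{1..r}. fps_nth h i * fps_right_inverse_constructor h c (r-i))"
      using r by (rule fps_right_inverse_constructor_rec)
    also have "(\<Sum>i\<in>{1..r}. fps_nth h i * fps_right_inverse_constructor h c (r-i))
       = (\<Sum>i\<in>insert r {1..<r}. fps_nth h i * fps_right_inverse_constructor h c (r-i))"
      by (simp only: split)
    also have "\<dots> = fps_nth h r * fps_right_inverse_constructor h c (r-r) + (\<Sum>i\<in>{1..<r}. fps_nth h i * fps_right_inverse_constructor h c (r-i))"
      by (rule sum.insert) auto
    finally show ?thesis by simp
  qed
  have A: "(\<Sum>i\<in>{1..<r}. fps_nth f i * fps_right_inverse_constructor f c (r-i))
         = (\<Sum>i\<in>{1..<r}. fps_nth g i * fps_right_inverse_constructor g c (r-i))"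
  proof (intro sum.cong refl)
    fix i assume i: "i \<in> {1..<r}"
    have "fps_nth f i = fps_nth g i" using i eq by (auto simp: f_def g_def WF_def)
    moreover have "fps_right_inverse_constructor f c (r-i) = fps_right_inverse_constructor g c (r-i)"
      by (rule fps_right_inverse_constructor_cong) (use i eq in \<open>auto simp: f_def g_def WF_def\<close>)
    ultimately show "fps_nth f i * fps_right_inverse_constructor f c (r-i) = fps_nth g i * fps_right_inverse_constructor g c (r-i)" by simp
  qed
  have "-c * (fps_nth f r * c + (\<Sum>i\<in>{1..<r}. fps_nth f i * fps_right_inverse_constructor f c (r-i)))
      = -c * (fps_nth g r * c + (\<Sum>i\<in>{1..<r}. fps_nth g i * fps_right_inverse_constructor g c (r-i)))"
  proof -
    have "-c * (fps_nth f r * c + (\<Sum>i\<in>{1..<r}. fps_nth f i * fps_right_inverse_constructor f c (r-i)))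
        = fps_right_inverse_constructor f c r" by (rule rec[symmetric])
    also have "\<dots> = fps_right_inverse_constructor g c r" using V by (simp add: Vf Vg)
    also have "\<dots> = -c * (fps_nth g r * c + (\<Sum>i\<in>{1..<r}. fps_nth g i * fps_right_inverse_constructor g c (r-i)))"
      by (rule rec)
    finally show ?thesis .
  qed
  hence "fps_nth f r = fps_nth g r" using c A by simp
  thus ?thesis by (simp add: f_def g_def WF_def)
qed

lemma length_Tm: "length xs = 2*n+1 \<Longrightarrow> m < n \<Longrightarrow> length (Tm m n xs) = 2*n+1"
  by (simp add: Tm_def Yl_def)

lemma Tm_nth:
  assumes "length xs = 2*n+1" "m < n" "p < 2*n+1"
  shows "Tm m n xs ! p = (if p < 2*m+2 then xs!p else fps_nth (VF ((!) xs) m) (p-m))"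
proof (cases "p < 2*m+2")
  case True thus ?thesis using assms by (simp add: Tm_def nth_append)
next
  case False
  hence "Tm m n xs ! p = Yl m n xs ! (p - (2*m+2))" using assms by (simp add: Tm_def nth_append)
  also have "\<dots> = fps_nth (VF ((!) xs) m) (m+2+(p - (2*m+2)))"
    unfolding Yl_def using assms False by (subst nth_map_upt) auto
  also have "m+2+(p - (2*m+2)) = p - m" using False by simp
  finally show ?thesis using False by simp
qed

lemma Tm_take_cong:
  assumes "length xs = 2*n+1" "length xs' = 2*n+1" "m < n" "j \<le> 2*n+1" "take j xs = take j xs'"
  shows "take j (Tm m n xs) = take j (Tm m n xs')"
proof (rule nth_equalityI)
  show "length (take j (Tm m n xs)) = length (take j (Tm m n xs'))" using assms by (simp add: length_Tm)
  fix p assume "p < length (take j (Tm m n xs))"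
  hence p: "p < j" using assms by (simp add: length_Tm)
  have eq: "\<forall>t<j. xs!t = xs'!t" using assms(5) by (metis nth_take)
  have "Tm m n xs ! p = Tm m n xs' ! p"
    using p assms eq by (auto simp: Tm_nth intro!: VF_cong)
  thus "take j (Tm m n xs) ! p = take j (Tm m n xs') ! p" using p by simp
qed

lemma Tm_inj:
  assumes l: "length xs = 2*n+1" "length xs' = 2*n+1" and mn: "m < n" and nz: "xs!m \<noteq> 0"
    and T: "Tm m n xs = Tm m n xs'"
  shows "xs = xs'"
proof -
  have "\<forall>p<2*n+1. xs!p = xs'!p"
  proof (intro allI)
    fix p show "p < 2*n+1 \<longrightarrow> xs!p = xs'!p"
    proof (induction p rule: less_induct)
      case (less p)
      show ?case
      proof
        assume p: "p < 2*n+1"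
        have Te: "Tm m n xs ! p = Tm m n xs' ! p" using T by simp
        show "xs!p = xs'!p"
        proof (cases "p < 2*m+2")
          case True thus ?thesis using Te l mn p by (simp add: Tm_nth)
        next
          case False
          have "xs!(m+(p-m)) = xs'!(m+(p-m))"
          proof (rule VF_last[OF _ _ nz])
            show "0 < p-m" using False by simp
            show "\<forall>t<m+(p-m). xs!t = xs'!t" using less p False by auto
            show "fps_nth (VF ((!) xs) m) (p-m) = fps_nth (VF ((!) xs') m) (p-m)"
              using Te l mn p False by (simp add: Tm_nth)
          qed
          thus ?thesis using False by simp
        qed
      qed
    qed
  qed
  thus ?thesis using l by (intro nth_equalityI) auto
qed



lemma count_nonzero:
  fixes a :: "'a::{field,finite} list"
  assumes IH: "\<And>n' k a. n' < n \<Longrightarrow> k \<le> n' \<Longrightarrow> length a = k \<Longrightarrow> card (S n' k (a::'a list)) = card (UNIV::'a set) ^ (2*n'-k)"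
    and la: "length a = n" and mn: "m < n" and z: "\<forall>t<m. a!t = 0" and nz: "a!m \<noteq> 0"
  shows "card (S n n a) = card (UNIV::'a set) ^ n"
proof -
  define q where "q = card (UNIV::'a set)"
  define D where "D = {xs::'a list. length xs = 2*n+1 \<and> take n xs = a}"
  define a0 where "a0 = a @ replicate (n+1) (0::'a)"
  define b where "b = take n (Tm m n a0)"
  define D' where "D' = {zs::'a list. length zs = 2*n+1 \<and> take n zs = b}"
  define n' where "n' = n-m-1"
  define l where "l = 2*m+2"
  define Q where "Q zs = (det (hankel n' (drop l zs)) = (0::'a))" for zs
  have a0D: "a0 \<in> D" using la by (simp add: D_def a0_def)
  have lb: "length b = n" using a0D mn by (simp add: b_def D_def length_Tm)
  have Dnth: "xs!t = a!t" if "xs \<in> D" "t < n" for xs t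
    using that by (metis (mono_tags, lifting) D_def mem_Collect_eq nth_take)
  have detiff: "det (hankel n xs) = 0 \<longleftrightarrow> Q (Tm m n xs)" if xs: "xs \<in> D" for xs
  proof -
    have lx: "length xs = 2*n+1" using xs by (simp add: D_def)
    have "det (hankel n xs) = 0 \<longleftrightarrow>
         det (hankel (n-m-1) (map (\<lambda>i. fps_nth (VF ((!) xs) m) (m+2+i)) [0..<2*(n-m-1)+1])) = 0"
      by (rule key_det) (use Dnth[OF xs] z nz mn in auto)
    also have "map (\<lambda>i. fps_nth (VF ((!) xs) m) (m+2+i)) [0..<2*(n-m-1)+1] = drop l (Tm m n xs)"
      using lx mn by (simp add: Tm_def Yl_def l_def)
    finally show ?thesis by (simp add: Q_def n'_def)
  qed
  have SD: "S n n a = {xs \<in> D. Q (Tm m n xs)}"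
    using detiff by (auto simp: S_def D_def)
  have inj: "inj_on (Tm m n) D"
  proof (rule inj_onI)
    fix xs xs' assume "xs \<in> D" "xs' \<in> D" "Tm m n xs = Tm m n xs'"
    thus "xs = xs'" using Tm_inj[of xs n xs' m] Dnth[of xs m] mn nz by (auto simp: D_def)
  qed
  have sub: "Tm m n ` D \<subseteq> D'"
  proof
    fix zs assume "zs \<in> Tm m n ` D"
    then obtain xs where xs: "xs \<in> D" and zs: "zs = Tm m n xs" by auto
    have "take n (Tm m n xs) = take n (Tm m n a0)"
      by (rule Tm_take_cong) (use xs a0D mn in \<open>auto simp: D_def\<close>)
    thus "zs \<in> D'" using xs mn zs by (simp add: D'_def D_def b_def length_Tm)
  qed
  have fD': "finite D'" using finite_len[of "2*n+1"] by (auto simp: D'_def intro: finite_subset)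
  have cD: "card D = q^(n+1)" unfolding D_def q_def by (subst card_prefix) (use la in auto)
  have cD': "card D' = q^(n+1)" unfolding D'_def q_def by (subst card_prefix) (use lb in auto)
  have imD: "Tm m n ` D = D'"
    by (rule card_subset_eq[OF fD' sub]) (simp add: card_image[OF inj] cD cD')
  have "card (S n n a) = card (Tm m n ` S n n a)"
    by (rule card_image[symmetric]) (rule inj_on_subset[OF inj], auto simp: SD)
  also have "Tm m n ` S n n a = {zs \<in> D'. Q zs}" unfolding SD imD[symmetric] by auto
  also have "{zs \<in> D'. Q zs} = {zs. length zs = l + (2*n'+1) \<and> take n (take l zs) = take l b
        \<and> (take (n-l) (drop l zs) = drop l b \<and> det (hankel n' (drop l zs)) = 0)}"
  proof -
    have "take n zs = b \<longleftrightarrow> take n (take l zs) = take l b \<and> take (n-l) (drop l zs) = drop l b"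
      if "length zs = 2*n+1" for zs
    proof -
      have lz: "length (take l zs) = l" using that mn by (simp add: l_def)
      have "take n zs = take n (take l zs) @ take (n-l) (drop l zs)"
        using lz by (metis append_take_drop_id take_append)
      moreover have "b = take l b @ drop l b" by simp
      moreover have "length (take n (take l zs)) = length (take l b)" using lz lb by simp
      ultimately show ?thesis by (metis append_eq_append_conv)
    qed
    moreover have "l + (2*n'+1) = 2*n+1" using mn by (simp add: l_def n'_def)
    ultimately show ?thesis by (auto simp: D'_def Q_def)
  qed
  also have "card \<dots> = card {u::'a list. length u = l \<and> take n u = take l b}
      * card {v. length v = 2*n'+1 \<and> (take (n-l) v = drop l b \<and> det (hankel n' v) = 0)}"
    by (rule card_append_split)
  also have "card {u::'a list. length u = l \<and> take n u = take l b} = q^(l - min n l)"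
  proof -
    have "{u::'a list. length u = l \<and> take n u = take l b} = {u. length u = l \<and> take (min n l) u = take l b}"
      by (auto simp: min_def)
    also have "card \<dots> = q^(l - min n l)" unfolding q_def by (subst card_prefix) (use lb in auto)
    finally show ?thesis .
  qed
  also have "card {v. length v = 2*n'+1 \<and> (take (n-l) v = drop l b \<and> det (hankel n' v) = 0)}
      = q^(2*n'-(n-l))"
  proof -
    have "card (S n' (n-l) (drop l b)) = q^(2*n'-(n-l))" unfolding q_def
      by (rule IH) (use mn lb in \<open>auto simp: n'_def l_def\<close>)
    thus ?thesis by (simp add: S_def)
  qed
  also have "q^(l - min n l) * q^(2*n'-(n-l)) = q^n"
  proof -
    have "(l - min n l) + (2*n'-(n-l)) = n" using mn by (auto simp: l_def n'_def min_def)
    thus ?thesis by (metis power_add)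
  qed
  finally show ?thesis by (simp add: q_def)
qed

lemma zero_case:
  fixes a :: "'a::{field,finite} list"
  assumes la: "length a = n" and z: "\<forall>t<n. a!t = 0"
  shows "card (S n n a) = card (UNIV::'a set) ^ n"
proof -
  have key: "det (hankel n xs) = 0 \<longleftrightarrow> xs!n = 0" if lx: "length xs = 2*n+1" and tx: "take n xs = a" for xs :: "'a list"
  proof
    assume d: "det (hankel n xs) = 0"
    show "xs!n = 0"
    proof (rule ccontr)
      assume "xs!n \<noteq> 0"
      hence "det (mat (n+1) (n+1) (\<lambda>(i,j). ((!) xs) (i+j))) \<noteq> 0"
      proof (intro antitri_det)
        fix t assume "t+1 < n+1"
        hence "t < n" by simp
        thus "xs!t = 0" using z tx by (metis nth_take)
      qed simp
      thus False using d by (simp add: hankel_def)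
    qed
  next
    assume xn: "xs!n = 0"
    have x0: "xs!t = 0" if "t \<le> n" for t
    proof (cases "t = n")
      case False thus ?thesis using that z tx by (metis le_neq_implies_less nth_take)
    qed (use xn in simp)
    have H: "hankel n xs \<in> carrier_mat (n+1) (n+1)" by (simp add: hankel_def)
    show "det (hankel n xs) = 0"
      unfolding det_0_iff_vec_prod_zero_field[OF H]
    proof (intro exI conjI)
      show "unit_vec (n+1) 0 \<in> carrier_vec (n+1)" by simp
      show "unit_vec (n+1) 0 \<noteq> (0\<^sub>v (n+1) :: 'a vec)"
      proof
        assume "unit_vec (n+1) 0 = (0\<^sub>v (n+1) :: 'a vec)"
        hence "unit_vec (n+1) 0 $ 0 = (0\<^sub>v (n+1) :: 'a vec) $ 0" by simp
        thus False by simp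
      qed
      show "hankel n xs *\<^sub>v unit_vec (n+1) 0 = 0\<^sub>v (n+1)"
        by (rule eq_vecI) (auto simp: hankel_def x0)
    qed
  qed
  have "S n n a = {xs. length xs = 2*n+1 \<and> take (n+1) xs = a @ [0]}"
  proof (intro equalityI subsetI)
    fix xs assume "xs \<in> S n n a"
    hence "length xs = 2*n+1" "take n xs = a" "det (hankel n xs) = 0" by (auto simp: S_def)
    thus "xs \<in> {xs. length xs = 2*n+1 \<and> take (n+1) xs = a @ [0]}"
      using key by (simp add: take_Suc_conv_app_nth)
  next
    fix xs assume "xs \<in> {xs. length xs = 2*n+1 \<and> take (n+1) xs = a @ [0]}"
    hence lx: "length xs = 2*n+1" and t: "take (Suc n) xs = a @ [0]" by auto
    hence "take n xs @ [xs!n] = a @ [0]" by (simp add: take_Suc_conv_app_nth)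
    hence "take n xs = a" "xs!n = 0" by auto
    thus "xs \<in> S n n a" using key lx by (simp add: S_def)
  qed
  also have "card \<dots> = card (UNIV::'a set) ^ (2*n+1 - (n+1))"
    by (rule card_prefix) (use la in auto)
  finally show ?thesis by simp
qed

lemma main_count:
  fixes a :: "'a::{field,finite} list"
  shows "k \<le> n \<Longrightarrow> length a = k \<Longrightarrow> card (S n k a) = card (UNIV::'a set) ^ (2*n-k)"
proof (induction n arbitrary: k a rule: less_induct)
  case (less n)
  have top: "card (S n n a') = card (UNIV::'a set) ^ n" if la: "length a' = n" for a' :: "'a list"
  proof (cases "\<forall>t<n. a'!t = 0")
    case True thus ?thesis using zero_case la by blast
  next
    case False
    define m where "m = (LEAST t. t < n \<and> a'!t \<noteq> 0)"
    have ex: "\<exists>t. t < n \<and> a'!t \<noteq> 0" using False by auto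
    have m1: "m < n \<and> a'!m \<noteq> 0" unfolding m_def by (rule LeastI_ex[OF ex])
    have m2: "\<forall>t<m. a'!t = 0"
    proof (intro allI impI)
      fix t assume "t < m"
      hence "\<not> (t < n \<and> a'!t \<noteq> 0)" unfolding m_def by (rule not_less_Least)
      thus "a'!t = 0" using \<open>t<m\<close> m1 by auto
    qed
    show ?thesis
      by (rule count_nonzero[OF _ la]) (use less.IH m1 m2 in auto)
  qed
  have "\<forall>a'::'a list. length a' = n - d \<longrightarrow> card (S n (n-d) a') = card (UNIV::'a set) ^ (2*n-(n-d))"
    if "d \<le> n" for d
    using that
  proof (induction d)
    case 0 thus ?case using top by simp
  next
    case (Suc d)
    show ?case
    proof (intro allI impI)
      fix a' :: "'a list" assume la: "length a' = n - Suc d"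
      have "card (S n (n - Suc d) a') = (\<Sum>c\<in>UNIV. card (S n (Suc (n - Suc d)) (a' @ [c])))"
        by (rule S_split) (use la Suc.prems in auto)
      also have "\<dots> = (\<Sum>c\<in>(UNIV::'a set). card (UNIV::'a set) ^ (2*n-(n-d)))"
      proof (intro sum.cong refl)
        fix c :: 'a
        have "Suc (n - Suc d) = n - d" using Suc.prems by simp
        thus "card (S n (Suc (n - Suc d)) (a' @ [c])) = card (UNIV::'a set) ^ (2*n-(n-d))"
          using Suc.IH Suc.prems la by simp
      qed
      also have "\<dots> = card (UNIV::'a set) ^ (2*n-(n - Suc d))"
      proof -
        have "2*n-(n - Suc d) = Suc (2*n-(n-d))" using Suc.prems by simp
        thus ?thesis by simp
      qed
      finally show "card (S n (n - Suc d) a') = card (UNIV::'a set) ^ (2*n-(n - Suc d))" .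
    qed
  qed
  from this[of "n-k"] less.prems show ?case by simp
qed

theorem corollary4:
  fixes a :: "'a::{field,finite} list" and k n :: nat
  assumes "k \<le> n" and "length a = k"
  shows "card {xs :: 'a list. length xs = 2*n+1 \<and> take k xs = a \<and> det (hankel n xs) = 0}
         = card (UNIV :: 'a set) ^ (2*n - k)"
  using main_count[OF assms] by (simp add: S_def)


end
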